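(* Let $n\ge 1$ and consider the order structure on the keys $[n]=\{1,\dots,n\}$, whose ranges are all intervals $\{i_1,i_1+1,\dots,i_2\}$ with $1\le i_1\le i_2\le n$. (i) For every vector $p=(p_1,\dots,p_n)\in[0,1]^n$ with $\sum_{i=1}^n p_i$ an integer, there exists a VarOpt sample distribution for $p$ whose maximum range discrepancy (with respect to intervals) satisfies $\Delta\le 2$. (ii) For every fixed real number $\Delta<2$, there exist $n$ and a vector $p\in[0,1]^n$ with $\sum_i p_i$ an integer such that no VarOpt sample distribution for $p$ has maximum range discrepancy (with respect to intervals) at most $\Delta$.
   Context: Given $p=(p_1,\dots,p_n)\in[0,1]^n$ with $s=\sum_i p_i$ an integer (in the paper the $p_i$ are the IPPS inclusion probabilities $p_i=\min\{1,w_i/\tau\}$ of weighted keys), a sample distribution is a probability distribution over subsets $S\subseteq[n]$. It is called VarOpt for $p$ if: (a) $\Pr[i\in S]=p_i$ for every $i$; (b) $|S|=s$ with probability one; (c) for every $J\subseteq[n]$, $\Pr[J\subseteq S]\le\prod_{i\in J}p_i$ and $\Pr[J\cap S=\emptyset]\le\prod_{i\in J}(1-p_i)$. For a family of ranges $\mathcal{R}$ (subsets of $[n]$), the maximum range discrepancy of a sample distribution $\Omega$ is $\Delta=\max_{S\in\operatorname{supp}\Omega}\max_{R\in\mathcal{R}}\big|\,|S\cap R|-\sum_{i\in R}p_i\,\big|$. *)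

theory Defs
  imports "HOL-Probability.Probability"
begin

text \<open>Keys are 1..n; p is given as a function nat => real, only its values on 1..n matter.
 A sample distribution is a pmf over subsets of the keys.\<close>

definition valid_probs :: "nat \<Rightarrow> (nat \<Rightarrow> real) \<Rightarrow> bool" where
  "valid_probs n p \<longleftrightarrow> (\<forall>i\<in>{1..n}. 0 \<le> p i \<and> p i \<le> 1) \<and> (\<Sum>i\<in>{1..n}. p i) \<in> \<int>"

definition varopt :: "nat \<Rightarrow> (nat \<Rightarrow> real) \<Rightarrow> nat set pmf \<Rightarrow> bool" where
  "varopt n p \<Omega> \<longleftrightarrow>
     (\<forall>S\<in>set_pmf \<Omega>. S \<subseteq> {1..n}) \<and>
     (\<forall>i\<in>{1..n}. measure_pmf.prob \<Omega> {S. i \<in> S} = p i) \<and>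
     (\<forall>S\<in>set_pmf \<Omega>. real (card S) = (\<Sum>i\<in>{1..n}. p i)) \<and>
     (\<forall>J. J \<subseteq> {1..n} \<longrightarrow>
        measure_pmf.prob \<Omega> {S. J \<subseteq> S} \<le> (\<Prod>i\<in>J. p i) \<and>
        measure_pmf.prob \<Omega> {S. J \<inter> S = {}} \<le> (\<Prod>i\<in>J. 1 - p i))"

definition interval_disc_le :: "nat \<Rightarrow> (nat \<Rightarrow> real) \<Rightarrow> nat set pmf \<Rightarrow> real \<Rightarrow> bool" where
  "interval_disc_le n p \<Omega> D \<longleftrightarrow>
     (\<forall>S\<in>set_pmf \<Omega>. \<forall>i1 i2. 1 \<le> i1 \<and> i1 \<le> i2 \<and> i2 \<le> n \<longrightarrow>
        \<bar>real (card (S \<inter> {i1..i2})) - (\<Sum>i\<in>{i1..i2}. p i)\<bar> \<le> D)"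

end

theory Submission
  imports Defs
begin

lemma mix_prob:
  assumes "0 \<le> l" "l \<le> 1"
  shows "measure_pmf.prob (bind_pmf (bernoulli_pmf l) (\<lambda>b. if b then A else B)) E
         = l * measure_pmf.prob A E + (1 - l) * measure_pmf.prob B E"
proof -
  have "ennreal (measure_pmf.prob (bind_pmf (bernoulli_pmf l) (\<lambda>b. if b then A else B)) E)
     = emeasure (measure_pmf (bind_pmf (bernoulli_pmf l) (\<lambda>b. if b then A else B))) E"
    by (simp only: measure_pmf.emeasure_eq_measure)
  also have "\<dots> = (\<integral>\<^sup>+b. emeasure (measure_pmf (if b then A else B)) E \<partial>(measure_pmf (bernoulli_pmf l)))"
    by (rule emeasure_bind_pmf)
  also have "\<dots> = emeasure (measure_pmf A) E * l + emeasure (measure_pmf B) E * (1 - l)"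
    using assms by (subst nn_integral_bernoulli_pmf) auto
  also have "\<dots> = ennreal (l * measure_pmf.prob A E + (1 - l) * measure_pmf.prob B E)"
    using assms by (simp only: measure_pmf.emeasure_eq_measure ennreal_mult''[symmetric] ennreal_plus[symmetric])
       (simp_all add: mult.commute)
  finally show ?thesis
    using assms by (subst (asm) ennreal_inj) auto
qed

lemma det_key1:
  assumes "measure_pmf.prob \<Omega> {S. l \<in> S} = 1" "S \<in> set_pmf \<Omega>"
  shows "l \<in> S"
proof -
  have "measure_pmf.prob \<Omega> (UNIV - {S. l \<in> S}) = 1 - measure_pmf.prob \<Omega> {S. l \<in> S}"
    using measure_pmf.prob_compl[of "{S. l \<in> S}" \<Omega>] by simp
  hence "measure_pmf.prob \<Omega> (UNIV - {S. l \<in> S}) = 0" using assms by simp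
  hence "set_pmf \<Omega> \<inter> (UNIV - {S. l \<in> S}) = {}" by (simp add: measure_pmf_zero_iff)
  thus ?thesis using assms by auto
qed

lemma det_key0:
  assumes "measure_pmf.prob \<Omega> {S. l \<in> S} = 0" "S \<in> set_pmf \<Omega>"
  shows "l \<notin> S"
proof -
  have "set_pmf \<Omega> \<inter> {S. l \<in> S} = {}" using assms(1) by (simp add: measure_pmf_zero_iff)
  thus ?thesis using assms by auto
qed

lemma card_as_sum:
  fixes A :: "nat set"
  assumes "finite A"
  shows "real (card (S \<inter> A)) = (\<Sum>l\<in>A. if l \<in> S then 1 else 0)"
proof -
  have "(\<Sum>l\<in>A. if l \<in> S then (1::real) else 0) = (\<Sum>l\<in>{l\<in>A. l \<in> S}. 1)"
    by (rule sum.inter_filter[OF assms, symmetric])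
  also have "{l\<in>A. l \<in> S} = S \<inter> A" by auto
  finally show ?thesis by simp
qed

lemma prefix_small_frac:
  fixes p :: "nat \<Rightarrow> real"
  assumes marg: "\<forall>l\<in>{1..k}. measure_pmf.prob \<Omega> {S. l \<in> S} = p l"
      and rng: "\<forall>l\<in>{1..k}. 0 \<le> p l \<and> p l \<le> 1"
      and fr: "card {l\<in>{1..k}. 0 < p l \<and> p l < 1} \<le> 1"
      and S: "S \<in> set_pmf \<Omega>"
  shows "\<bar>real (card (S \<inter> {1..k})) - (\<Sum>i\<in>{1..k}. p i)\<bar> \<le> 1"
proof -
  let ?Fr = "{l\<in>{1..k}. 0 < p l \<and> p l < 1}"
  let ?f = "\<lambda>l. (if l \<in> S then 1 else 0) - p l"
  have "real (card (S \<inter> {1..k})) - (\<Sum>i\<in>{1..k}. p i) = (\<Sum>l\<in>{1..k}. ?f l)"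
    by (simp add: card_as_sum sum_subtractf)
  also have "\<dots> = (\<Sum>l\<in>?Fr. ?f l)"
  proof (rule sum.mono_neutral_right)
    show "\<forall>l\<in>{1..k} - ?Fr. ?f l = 0"
    proof
      fix l assume l: "l \<in> {1..k} - ?Fr"
      hence "p l = 0 \<or> p l = 1" using rng by force
      thus "?f l = 0"
      proof
        assume "p l = 0" thus ?thesis using det_key0[of \<Omega> l S] marg l S by auto
      next
        assume "p l = 1" thus ?thesis using det_key1[of \<Omega> l S] marg l S by auto
      qed
    qed
  qed auto
  finally have eq: "real (card (S \<inter> {1..k})) - (\<Sum>i\<in>{1..k}. p i) = (\<Sum>l\<in>?Fr. ?f l)" .
  have "\<bar>\<Sum>l\<in>?Fr. ?f l\<bar> \<le> (\<Sum>l\<in>?Fr. \<bar>?f l\<bar>)" by (rule sum_abs)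
  also have "\<dots> \<le> (\<Sum>l\<in>?Fr. 1)" by (rule sum_mono) auto
  also have "\<dots> \<le> 1" using fr by simp
  finally show ?thesis unfolding eq .
qed

lemma sum_pair_eq:
  fixes a c :: "nat \<Rightarrow> real"
  assumes "finite A" "i \<in> A" "j \<in> A" "i \<noteq> j" "\<forall>l. l \<noteq> i \<and> l \<noteq> j \<longrightarrow> a l = c l"
    "a i + a j = c i + c j"
  shows "sum a A = sum c A"
proof -
  have r: "sum f A = f i + f j + sum f (A - {i} - {j})" for f :: "nat \<Rightarrow> real"
    using assms(1-4) by (simp add: sum.remove[of A i] sum.remove[of "A - {i}" j])
  have "sum a (A - {i} - {j}) = sum c (A - {i} - {j})" by (rule sum.cong) (use assms(5) in auto)
  thus ?thesis using r[of a] r[of c] assms(6) by simp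
qed

lemma prod_split2:
  fixes f :: "nat \<Rightarrow> real"
  assumes "finite J" "i \<noteq> j"
  shows "prod f J = prod f (J - {i} - {j}) * (if i \<in> J then f i else 1) * (if j \<in> J then f j else 1)"
proof -
  have a: "prod f K = (if x \<in> K then f x else 1) * prod f (K - {x})" if "finite K" for K x
    using that by (cases "x \<in> K") (auto simp: prod.remove)
  have "prod f J = (if i \<in> J then f i else 1) * prod f (J - {i})" using a assms by blast
  also have "prod f (J - {i}) = (if j \<in> J then f j else 1) * prod f (J - {i} - {j})"
    using a[of "J - {i}" j] assms by auto
  finally show ?thesis by (simp add: algebra_simps)
qed

lemma mix_prod:
  fixes a b c :: "nat \<Rightarrow> real"
  assumes fin: "finite J" and ij: "i \<noteq> j"
    and eq: "\<forall>l. l \<noteq> i \<and> l \<noteq> j \<longrightarrow> a l = c l \<and> b l = c l"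
    and li: "lam * a i + (1 - lam) * b i = c i" and lj: "lam * a j + (1 - lam) * b j = c j"
    and lij: "lam * (a i * a j) + (1 - lam) * (b i * b j) \<le> c i * c j"
    and nn: "\<forall>l\<in>J. 0 \<le> c l"
  shows "lam * (\<Prod>l\<in>J. a l) + (1 - lam) * (\<Prod>l\<in>J. b l) \<le> (\<Prod>l\<in>J. c l)"
proof -
  define P where "P = prod c (J - {i} - {j})"
  have Pa: "prod a (J - {i} - {j}) = P" unfolding P_def by (rule prod.cong) (use eq in auto)
  have Pb: "prod b (J - {i} - {j}) = P" unfolding P_def by (rule prod.cong) (use eq in auto)
  have P0: "0 \<le> P" unfolding P_def using nn by (intro prod_nonneg) auto
  have A: "prod a J = P * (if i \<in> J then a i else 1) * (if j \<in> J then a j else 1)"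
    using prod_split2[OF fin ij, of a] Pa by simp
  have B: "prod b J = P * (if i \<in> J then b i else 1) * (if j \<in> J then b j else 1)"
    using prod_split2[OF fin ij, of b] Pb by simp
  have C: "prod c J = P * (if i \<in> J then c i else 1) * (if j \<in> J then c j else 1)"
    using prod_split2[OF fin ij, of c] unfolding P_def by simp
  show ?thesis
  proof (cases "i \<in> J"; cases "j \<in> J")
    assume "i \<in> J" "j \<in> J"
    have "P * (lam * (a i * a j) + (1 - lam) * (b i * b j)) \<le> P * (c i * c j)"
      using lij P0 by (rule mult_left_mono)
    thus ?thesis using A B C \<open>i \<in> J\<close> \<open>j \<in> J\<close> by (simp add: algebra_simps)
  next
    assume "i \<in> J" "j \<notin> J"
    thus ?thesis using A B C li by (simp add: algebra_simps flip: li)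
  next
    assume "i \<notin> J" "j \<in> J"
    thus ?thesis using A B C lj by (simp add: algebra_simps flip: lj)
  next
    assume "i \<notin> J" "j \<notin> J"
    thus ?thesis using A B C by (simp add: algebra_simps)
  qed
qed


lemma aggregate:
  fixes x y :: real
  assumes x0: "0 < x" and x1: "x < 1" and y0: "0 < y" and y1: "y < 1"
  shows "\<exists>lam a1 a2 b1 b2. 0 \<le> lam \<and> lam \<le> 1 \<and>
     lam * a1 + (1-lam) * b1 = x \<and> lam * a2 + (1-lam) * b2 = y \<and>
     a1 + a2 = x + y \<and> b1 + b2 = x + y \<and>
     0 \<le> a1 \<and> a1 \<le> 1 \<and> 0 \<le> a2 \<and> a2 \<le> 1 \<and> 0 \<le> b1 \<and> b1 \<le> 1 \<and> 0 \<le> b2 \<and> b2 \<le> 1 \<and>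
     (a1 = 0 \<or> a1 = 1 \<or> a2 = 0 \<or> a2 = 1) \<and> (b1 = 0 \<or> b1 = 1 \<or> b2 = 0 \<or> b2 = 1) \<and>
     lam * (a1*a2) + (1-lam)*(b1*b2) \<le> x*y \<and>
     lam * ((1-a1)*(1-a2)) + (1-lam)*((1-b1)*(1-b2)) \<le> (1-x)*(1-y)"
proof (cases "x + y \<le> 1")
  case True
  define lam where "lam = x / (x + y)"
  have t0: "0 < x + y" using x0 y0 by simp
  have l0: "0 \<le> lam" "lam \<le> 1" unfolding lam_def using x0 y0 by auto
  have e1: "lam * (x + y) = x" unfolding lam_def using t0 by simp
  have e2: "(1 - lam) * (x + y) = y" using e1 by (simp add: algebra_simps)
  have p2: "1 - (x + y) \<le> (1 - x) * (1 - y)" using x0 y0 by (simp add: algebra_simps)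
  have p2': "lam * ((1 - (x + y)) * (1 - 0)) + (1 - lam) * ((1 - 0) * (1 - (x + y))) = 1 - (x + y)"
    by (simp add: algebra_simps)
  show ?thesis
    apply (rule exI[of _ lam], rule exI[of _ "x+y"], rule exI[of _ 0], rule exI[of _ 0], rule exI[of _ "x+y"])
    using l0 e1 e2 True x0 y0 p2 p2' x0 y0 by (auto simp: mult.commute)
next
  case False
  define lam where "lam = (1 - y) / (2 - x - y)"
  have t0: "0 < 2 - x - y" using x1 y1 by simp
  have l0: "0 \<le> lam" "lam \<le> 1" unfolding lam_def using x1 y1 t0 by auto
  have L: "lam * (2 - x - y) = 1 - y" unfolding lam_def using t0 by simp
  have "lam * 1 + (1 - lam) * (x + y - 1) = lam * (2 - x - y) + x + y - 1" by (simp add: algebra_simps)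
  with L have e1: "lam * 1 + (1 - lam) * (x + y - 1) = x" by simp
  have "lam * (x + y - 1) + (1 - lam) * 1 = 1 - lam * (2 - x - y)" by (simp add: algebra_simps)
  with L have e2: "lam * (x + y - 1) + (1 - lam) * 1 = y" by simp
  have p1: "x + y - 1 \<le> x * y" proof -
    have "0 \<le> (1 - x) * (1 - y)" using x1 y1 by simp
    thus ?thesis by (simp add: algebra_simps)
  qed
  have p1': "lam * (1 * (x + y - 1)) + (1 - lam) * ((x + y - 1) * 1) = x + y - 1"
    by (simp add: algebra_simps)
  show ?thesis
    apply (rule exI[of _ lam], rule exI[of _ 1], rule exI[of _ "x+y-1"], rule exI[of _ "x+y-1"], rule exI[of _ 1])
    using l0 e1 e2 False x1 y1 p1 p1' x0 y0 x1 y1 by auto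
qed


definition frac :: "nat \<Rightarrow> (nat \<Rightarrow> real) \<Rightarrow> nat set" where
  "frac n p = {i \<in> {1..n}. 0 < p i \<and> p i < 1}"

definition prefix_ok :: "nat \<Rightarrow> (nat \<Rightarrow> real) \<Rightarrow> nat set pmf \<Rightarrow> bool" where
  "prefix_ok n p \<Omega> \<longleftrightarrow> (\<forall>S\<in>set_pmf \<Omega>. \<forall>k\<le>n. \<bar>real (card (S \<inter> {1..k})) - (\<Sum>i\<in>{1..k}. p i)\<bar> \<le> 1)"

lemma Ints_not_frac: "(x::real) \<in> \<int> \<Longrightarrow> 0 < x \<Longrightarrow> x < 1 \<Longrightarrow> False"
  by (elim Ints_cases) auto

lemma base_case:
  assumes v: "valid_probs n p" and e: "frac n p = {}"
  shows "\<exists>\<Omega>. varopt n p \<Omega> \<and> prefix_ok n p \<Omega>"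
proof -
  define A where "A = {l\<in>{1..n}. p l = 1}"
  have p01: "p l = 0 \<or> p l = 1" if "l \<in> {1..n}" for l
    using v e that unfolding valid_probs_def frac_def by force
  let ?\<Omega> = "return_pmf A"
  have marg: "\<forall>l\<in>{1..n}. measure_pmf.prob ?\<Omega> {S. l \<in> S} = p l"
  proof
    fix l assume l: "l \<in> {1..n}"
    from p01[OF l] show "measure_pmf.prob ?\<Omega> {S. l \<in> S} = p l"
      using l by (auto simp: A_def indicator_def)
  qed
  have vo: "varopt n p ?\<Omega>"
    unfolding varopt_def
  proof (intro conjI)
    show "\<forall>S\<in>set_pmf ?\<Omega>. S \<subseteq> {1..n}" by (auto simp: A_def)
    show "\<forall>l\<in>{1..n}. measure_pmf.prob ?\<Omega> {S. l \<in> S} = p l" by (rule marg)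
    have "(\<Sum>i\<in>{1..n}. p i) = (\<Sum>i\<in>{1..n}. if p i = 1 then 1 else 0)"
      by (rule sum.cong) (use p01 in auto)
    also have "\<dots> = (\<Sum>i\<in>A. 1)" unfolding A_def by (rule sum.inter_filter[symmetric]) simp
    finally show "\<forall>S\<in>set_pmf ?\<Omega>. real (card S) = (\<Sum>i\<in>{1..n}. p i)" by simp
    show "\<forall>J. J \<subseteq> {1..n} \<longrightarrow>
        measure_pmf.prob ?\<Omega> {S. J \<subseteq> S} \<le> (\<Prod>i\<in>J. p i) \<and>
        measure_pmf.prob ?\<Omega> {S. J \<inter> S = {}} \<le> (\<Prod>i\<in>J. 1 - p i)"
    proof (intro allI impI conjI)
      fix J assume J: "J \<subseteq> {1..n}"
      have finJ: "finite J" using J finite_subset by blast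
      show "measure_pmf.prob ?\<Omega> {S. J \<subseteq> S} \<le> (\<Prod>i\<in>J. p i)"
      proof (cases "J \<subseteq> A")
        case True
        hence "(\<Prod>i\<in>J. p i) = 1" by (intro prod.neutral) (auto simp: A_def)
        thus ?thesis by (simp add: indicator_def)
      next
        case False
        then obtain l where l: "l \<in> J" "l \<notin> A" by auto
        hence "p l = 0" using p01[of l] J A_def by auto
        hence "(\<Prod>i\<in>J. p i) = 0" using finJ l by (intro prod_zero) auto
        thus ?thesis using False by (simp add: indicator_def)
      qed
      show "measure_pmf.prob ?\<Omega> {S. J \<inter> S = {}} \<le> (\<Prod>i\<in>J. 1 - p i)"
      proof (cases "J \<inter> A = {}")
        case True
        have "\<forall>l\<in>J. p l = 0"
        proof
          fix l assume lJ: "l \<in> J"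
          have ln: "l \<in> {1..n}" using lJ J by auto
          have "l \<notin> A" using True lJ by auto
          thus "p l = 0" using p01[OF ln] ln A_def by auto
        qed
        hence "(\<Prod>i\<in>J. 1 - p i) = 1" by (intro prod.neutral) auto
        thus ?thesis by (simp add: indicator_def)
      next
        case False
        then obtain l where l: "l \<in> J" "l \<in> A" by auto
        hence "1 - p l = 0" using A_def by auto
        hence "(\<Prod>i\<in>J. 1 - p i) = 0" using finJ l by (intro prod_zero) auto
        thus ?thesis using False by (simp add: indicator_def)
      qed
    qed
  qed
  have "prefix_ok n p ?\<Omega>"
    unfolding prefix_ok_def
  proof (intro ballI allI impI)
    fix S k assume S: "S \<in> set_pmf ?\<Omega>" and k: "k \<le> n"
    show "\<bar>real (card (S \<inter> {1..k})) - (\<Sum>i\<in>{1..k}. p i)\<bar> \<le> 1"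
    proof (rule prefix_small_frac[OF _ _ _ S])
      show "\<forall>l\<in>{1..k}. measure_pmf.prob ?\<Omega> {S. l \<in> S} = p l" using marg k by auto
      show "\<forall>l\<in>{1..k}. 0 \<le> p l \<and> p l \<le> 1" using v k unfolding valid_probs_def by auto
      have e2: "{l\<in>{1..k}. 0 < p l \<and> p l < 1} = {}" using e k unfolding frac_def by auto
      show "card {l\<in>{1..k}. 0 < p l \<and> p l < 1} \<le> 1" unfolding e2 by simp
    qed
  qed
  with vo show ?thesis by blast
qed


lemma varoptD:
  assumes "varopt n p \<Omega>"
  shows varopt_supp: "\<forall>S\<in>set_pmf \<Omega>. S \<subseteq> {1..n}"
    and varopt_marg: "\<forall>i\<in>{1..n}. measure_pmf.prob \<Omega> {S. i \<in> S} = p i"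
    and varopt_card: "\<forall>S\<in>set_pmf \<Omega>. real (card S) = (\<Sum>i\<in>{1..n}. p i)"
    and varopt_J: "\<forall>J. J \<subseteq> {1..n} \<longrightarrow>
        measure_pmf.prob \<Omega> {S. J \<subseteq> S} \<le> (\<Prod>i\<in>J. p i) \<and>
        measure_pmf.prob \<Omega> {S. J \<inter> S = {}} \<le> (\<Prod>i\<in>J. 1 - p i)"
  using assms by (simp_all add: varopt_def)

lemma step_case:
  assumes v: "valid_probs n p" and ne: "frac n p \<noteq> {}"
    and IH: "\<And>q. card (frac n q) < card (frac n p) \<Longrightarrow> valid_probs n q \<Longrightarrow>
                 (\<exists>\<Omega>. varopt n q \<Omega> \<and> prefix_ok n q \<Omega>)"
  shows "\<exists>\<Omega>. varopt n p \<Omega> \<and> prefix_ok n p \<Omega>"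
proof -
  have finF: "finite (frac n p)" unfolding frac_def by simp
  have rng: "\<forall>l\<in>{1..n}. 0 \<le> p l \<and> p l \<le> 1" and intg: "(\<Sum>i\<in>{1..n}. p i) \<in> \<int>"
    using v unfolding valid_probs_def by auto
  define i where "i = Min (frac n p)"
  have iF: "i \<in> frac n p" unfolding i_def using finF ne by (rule Min_in)
  have iin: "i \<in> {1..n}" and ip: "0 < p i" "p i < 1" using iF unfolding frac_def by auto
  have ne2: "frac n p - {i} \<noteq> {}"
  proof
    assume e: "frac n p - {i} = {}"
    have int_rest: "(\<Sum>l\<in>{1..n} - {i}. p l) \<in> \<int>"
    proof (rule Ints_sum)
      fix l assume l: "l \<in> {1..n} - {i}"
      hence "l \<notin> frac n p" using e by auto
      hence "p l = 0 \<or> p l = 1" using rng l unfolding frac_def by force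
      thus "p l \<in> \<int>" by auto
    qed
    have "(\<Sum>l\<in>{1..n}. p l) = p i + (\<Sum>l\<in>{1..n} - {i}. p l)" using iin by (simp add: sum.remove)
    hence "p i = (\<Sum>l\<in>{1..n}. p l) - (\<Sum>l\<in>{1..n} - {i}. p l)" by simp
    hence "p i \<in> \<int>" using intg int_rest by (simp add: Ints_diff)
    thus False using ip Ints_not_frac by blast
  qed
  define j where "j = Min (frac n p - {i})"
  have jF': "j \<in> frac n p - {i}" unfolding j_def using finF ne2 by (intro Min_in) auto
  hence jF: "j \<in> frac n p" and jni: "j \<noteq> i" by auto
  have jin: "j \<in> {1..n}" and jp: "0 < p j" "p j < 1" using jF unfolding frac_def by auto
  have "i \<le> j" unfolding i_def using finF jF by simp
  hence ij: "i < j" using jni by simp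
  have between: "l = i \<or> j \<le> l" if "l \<in> frac n p" for l
  proof (cases "l = i")
    case False
    hence "l \<in> frac n p - {i}" using that by auto
    thus ?thesis unfolding j_def using finF by simp
  qed simp
  obtain lam a1 a2 b1 b2 where l0: "0 \<le> lam" and l1: "lam \<le> 1"
     and ex: "lam * a1 + (1-lam) * b1 = p i" and ey: "lam * a2 + (1-lam) * b2 = p j"
     and sa: "a1 + a2 = p i + p j" and sb: "b1 + b2 = p i + p j"
     and ra: "0 \<le> a1" "a1 \<le> 1" "0 \<le> a2" "a2 \<le> 1"
     and rb: "0 \<le> b1" "b1 \<le> 1" "0 \<le> b2" "b2 \<le> 1"
     and ia: "a1 = 0 \<or> a1 = 1 \<or> a2 = 0 \<or> a2 = 1"
     and ib: "b1 = 0 \<or> b1 = 1 \<or> b2 = 0 \<or> b2 = 1"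
     and pr1: "lam * (a1*a2) + (1-lam)*(b1*b2) \<le> p i * p j"
     and pr2: "lam * ((1-a1)*(1-a2)) + (1-lam)*((1-b1)*(1-b2)) \<le> (1 - p i)*(1 - p j)"
    using aggregate[OF ip jp] by blast
  define pA where "pA = p(i := a1, j := a2)"
  define pB where "pB = p(i := b1, j := b2)"
  have pAi: "pA i = a1" and pAj: "pA j = a2" unfolding pA_def using jni by auto
  have pBi: "pB i = b1" and pBj: "pB j = b2" unfolding pB_def using jni by auto
  have pAo: "\<forall>l. l \<noteq> i \<and> l \<noteq> j \<longrightarrow> pA l = p l" unfolding pA_def by auto
  have pBo: "\<forall>l. l \<noteq> i \<and> l \<noteq> j \<longrightarrow> pB l = p l" unfolding pB_def by auto
  have sumA: "sum pA K = sum p K" if "finite K" "i \<in> K" "j \<in> K" for K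
    by (rule sum_pair_eq[OF that jni[symmetric] pAo]) (simp add: pAi pAj sa)
  have sumB: "sum pB K = sum p K" if "finite K" "i \<in> K" "j \<in> K" for K
    by (rule sum_pair_eq[OF that jni[symmetric] pBo]) (simp add: pBi pBj sb)
  have validA: "valid_probs n pA"
    unfolding valid_probs_def using sumA[of "{1..n}"] iin jin intg rng pAo pAi pAj ra by auto
  have validB: "valid_probs n pB"
    unfolding valid_probs_def using sumB[of "{1..n}"] iin jin intg rng pBo pBi pBj rb by auto
  have subA: "frac n pA \<subset> frac n p"
  proof
    show "frac n pA \<subseteq> frac n p"
    proof
      fix l assume l: "l \<in> frac n pA"
      show "l \<in> frac n p"
      proof (cases "l = i \<or> l = j")
        case True thus ?thesis using iF jF by auto
      next
        case False thus ?thesis using l pAo unfolding frac_def by auto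
      qed
    qed
    show "frac n pA \<noteq> frac n p"
    proof
      assume eq: "frac n pA = frac n p"
      have "i \<in> frac n pA" "j \<in> frac n pA" using iF jF eq by auto
      thus False using ia pAi pAj unfolding frac_def by auto
    qed
  qed
  have subB: "frac n pB \<subset> frac n p"
  proof
    show "frac n pB \<subseteq> frac n p"
    proof
      fix l assume l: "l \<in> frac n pB"
      show "l \<in> frac n p"
      proof (cases "l = i \<or> l = j")
        case True thus ?thesis using iF jF by auto
      next
        case False thus ?thesis using l pBo unfolding frac_def by auto
      qed
    qed
    show "frac n pB \<noteq> frac n p"
    proof
      assume eq: "frac n pB = frac n p"
      have "i \<in> frac n pB" "j \<in> frac n pB" using iF jF eq by auto
      thus False using ib pBi pBj unfolding frac_def by auto
    qed
  qed
  obtain \<Omega>A where voA: "varopt n pA \<Omega>A" and poA: "prefix_ok n pA \<Omega>A"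
    using IH[OF psubset_card_mono[OF finF subA] validA] by blast
  obtain \<Omega>B where voB: "varopt n pB \<Omega>B" and poB: "prefix_ok n pB \<Omega>B"
    using IH[OF psubset_card_mono[OF finF subB] validB] by blast
  define \<Omega> where "\<Omega> = bind_pmf (bernoulli_pmf lam) (\<lambda>b. if b then \<Omega>A else \<Omega>B)"
  have supp: "set_pmf \<Omega> \<subseteq> set_pmf \<Omega>A \<union> set_pmf \<Omega>B"
  proof -
    have "set_pmf \<Omega> = (\<Union>b\<in>set_pmf (bernoulli_pmf lam). set_pmf (if b then \<Omega>A else \<Omega>B))"
      unfolding \<Omega>_def by (rule set_bind_pmf)
    also have "\<dots> \<subseteq> set_pmf \<Omega>A \<union> set_pmf \<Omega>B"
    proof (rule UN_least)
      fix b show "set_pmf (if b then \<Omega>A else \<Omega>B) \<subseteq> set_pmf \<Omega>A \<union> set_pmf \<Omega>B"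
        by (cases b) simp_all
    qed
    finally show ?thesis .
  qed
  have probO: "measure_pmf.prob \<Omega> E = lam * measure_pmf.prob \<Omega>A E + (1-lam) * measure_pmf.prob \<Omega>B E" for E
    unfolding \<Omega>_def by (rule mix_prob[OF l0 l1])
  have mA: "\<forall>l\<in>{1..n}. measure_pmf.prob \<Omega>A {S. l \<in> S} = pA l" using varopt_marg[OF voA] by blast
  have mB: "\<forall>l\<in>{1..n}. measure_pmf.prob \<Omega>B {S. l \<in> S} = pB l" using varopt_marg[OF voB] by blast
  have marg: "\<forall>l\<in>{1..n}. measure_pmf.prob \<Omega> {S. l \<in> S} = p l"
  proof
    fix l assume l: "l \<in> {1..n}"
    have "measure_pmf.prob \<Omega> {S. l \<in> S} = lam * pA l + (1 - lam) * pB l"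
      using probO mA mB l by simp
    also have "\<dots> = p l"
    proof (cases "l = i \<or> l = j")
      case True thus ?thesis using ex ey pAi pAj pBi pBj by auto
    next
      case False thus ?thesis using pAo pBo by (simp add: algebra_simps)
    qed
    finally show "measure_pmf.prob \<Omega> {S. l \<in> S} = p l" .
  qed
  have vo: "varopt n p \<Omega>"
    unfolding varopt_def
  proof (intro conjI)
    show "\<forall>S\<in>set_pmf \<Omega>. S \<subseteq> {1..n}" using supp varopt_supp[OF voA] varopt_supp[OF voB] by blast
    show "\<forall>l\<in>{1..n}. measure_pmf.prob \<Omega> {S. l \<in> S} = p l" by (rule marg)
    show "\<forall>S\<in>set_pmf \<Omega>. real (card S) = (\<Sum>i\<in>{1..n}. p i)"
    proof
      fix S assume "S \<in> set_pmf \<Omega>"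
      hence "S \<in> set_pmf \<Omega>A \<or> S \<in> set_pmf \<Omega>B" using supp by auto
      thus "real (card S) = (\<Sum>i\<in>{1..n}. p i)"
      proof
        assume "S \<in> set_pmf \<Omega>A"
        hence "real (card S) = (\<Sum>i\<in>{1..n}. pA i)" using varopt_card[OF voA] by blast
        also have "\<dots> = (\<Sum>i\<in>{1..n}. p i)" using sumA[of "{1..n}"] iin jin by simp
        finally show ?thesis .
      next
        assume "S \<in> set_pmf \<Omega>B"
        hence "real (card S) = (\<Sum>i\<in>{1..n}. pB i)" using varopt_card[OF voB] by blast
        also have "\<dots> = (\<Sum>i\<in>{1..n}. p i)" using sumB[of "{1..n}"] iin jin by simp
        finally show ?thesis .
      qed
    qed
    show "\<forall>J. J \<subseteq> {1..n} \<longrightarrow>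
        measure_pmf.prob \<Omega> {S. J \<subseteq> S} \<le> (\<Prod>i\<in>J. p i) \<and>
        measure_pmf.prob \<Omega> {S. J \<inter> S = {}} \<le> (\<Prod>i\<in>J. 1 - p i)"
    proof (intro allI impI conjI)
      fix J assume J: "J \<subseteq> {1..n}"
      have finJ: "finite J" using J finite_subset by blast
      have JA: "measure_pmf.prob \<Omega>A {S. J \<subseteq> S} \<le> (\<Prod>i\<in>J. pA i)"
        "measure_pmf.prob \<Omega>A {S. J \<inter> S = {}} \<le> (\<Prod>i\<in>J. 1 - pA i)"
        using varopt_J[OF voA] J by blast+
      have JB: "measure_pmf.prob \<Omega>B {S. J \<subseteq> S} \<le> (\<Prod>i\<in>J. pB i)"
        "measure_pmf.prob \<Omega>B {S. J \<inter> S = {}} \<le> (\<Prod>i\<in>J. 1 - pB i)"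
        using varopt_J[OF voB] J by blast+
      have l0': "0 \<le> 1 - lam" using l1 by simp
      have "measure_pmf.prob \<Omega> {S. J \<subseteq> S} \<le> lam * (\<Prod>i\<in>J. pA i) + (1 - lam) * (\<Prod>i\<in>J. pB i)"
        unfolding probO by (intro add_mono mult_left_mono JA JB l0 l0')
      also have "\<dots> \<le> (\<Prod>i\<in>J. p i)"
      proof (rule mix_prod[OF finJ jni[symmetric]])
        show "\<forall>l. l \<noteq> i \<and> l \<noteq> j \<longrightarrow> pA l = p l \<and> pB l = p l" using pAo pBo by blast
        show "lam * pA i + (1 - lam) * pB i = p i" using ex pAi pBi by simp
        show "lam * pA j + (1 - lam) * pB j = p j" using ey pAj pBj by simp
        show "lam * (pA i * pA j) + (1 - lam) * (pB i * pB j) \<le> p i * p j" using pr1 pAi pAj pBi pBj by simp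
        show "\<forall>l\<in>J. 0 \<le> p l" using rng J by auto
      qed
      finally show "measure_pmf.prob \<Omega> {S. J \<subseteq> S} \<le> (\<Prod>i\<in>J. p i)" .
      have "measure_pmf.prob \<Omega> {S. J \<inter> S = {}} \<le> lam * (\<Prod>i\<in>J. 1 - pA i) + (1 - lam) * (\<Prod>i\<in>J. 1 - pB i)"
        unfolding probO by (intro add_mono mult_left_mono JA JB l0 l0')
      also have "\<dots> \<le> (\<Prod>i\<in>J. 1 - p i)"
      proof (rule mix_prod[OF finJ jni[symmetric], where a="\<lambda>l. 1 - pA l" and b="\<lambda>l. 1 - pB l" and c="\<lambda>l. 1 - p l"])
        show "\<forall>l. l \<noteq> i \<and> l \<noteq> j \<longrightarrow> 1 - pA l = 1 - p l \<and> 1 - pB l = 1 - p l" using pAo pBo by simp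
        have "lam * (1 - a1) + (1 - lam) * (1 - b1) = 1 - (lam * a1 + (1 - lam) * b1)" by (simp add: algebra_simps)
        thus "lam * (1 - pA i) + (1 - lam) * (1 - pB i) = 1 - p i" using ex pAi pBi by simp
        have "lam * (1 - a2) + (1 - lam) * (1 - b2) = 1 - (lam * a2 + (1 - lam) * b2)" by (simp add: algebra_simps)
        thus "lam * (1 - pA j) + (1 - lam) * (1 - pB j) = 1 - p j" using ey pAj pBj by simp
        show "lam * ((1 - pA i) * (1 - pA j)) + (1 - lam) * ((1 - pB i) * (1 - pB j)) \<le> (1 - p i) * (1 - p j)"
          using pr2 pAi pAj pBi pBj by simp
        show "\<forall>l\<in>J. 0 \<le> 1 - p l" using rng J by auto
      qed
      finally show "measure_pmf.prob \<Omega> {S. J \<inter> S = {}} \<le> (\<Prod>i\<in>J. 1 - p i)" .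
    qed
  qed
  have "prefix_ok n p \<Omega>"
    unfolding prefix_ok_def
  proof (intro ballI allI impI)
    fix S k assume S: "S \<in> set_pmf \<Omega>" and k: "k \<le> n"
    show "\<bar>real (card (S \<inter> {1..k})) - (\<Sum>i\<in>{1..k}. p i)\<bar> \<le> 1"
    proof (cases "j \<le> k")
      case True
      have ik: "i \<in> {1..k}" "j \<in> {1..k}" using iin jin ij True by auto
      show ?thesis
      proof (cases "S \<in> set_pmf \<Omega>A")
        case True
        have "\<bar>real (card (S \<inter> {1..k})) - (\<Sum>i\<in>{1..k}. pA i)\<bar> \<le> 1"
          using poA True k unfolding prefix_ok_def by blast
        moreover have "(\<Sum>i\<in>{1..k}. pA i) = (\<Sum>i\<in>{1..k}. p i)" using sumA[of "{1..k}"] ik by simp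
        ultimately show ?thesis by simp
      next
        case False
        hence "S \<in> set_pmf \<Omega>B" using S supp by auto
        have "\<bar>real (card (S \<inter> {1..k})) - (\<Sum>i\<in>{1..k}. pB i)\<bar> \<le> 1"
          using poB \<open>S \<in> set_pmf \<Omega>B\<close> k unfolding prefix_ok_def by blast
        moreover have "(\<Sum>i\<in>{1..k}. pB i) = (\<Sum>i\<in>{1..k}. p i)" using sumB[of "{1..k}"] ik by simp
        ultimately show ?thesis by simp
      qed
    next
      case False
      show ?thesis
      proof (rule prefix_small_frac[OF _ _ _ S])
        show "\<forall>l\<in>{1..k}. measure_pmf.prob \<Omega> {S. l \<in> S} = p l" using marg k by auto
        show "\<forall>l\<in>{1..k}. 0 \<le> p l \<and> p l \<le> 1" using rng k by auto
        have "{l\<in>{1..k}. 0 < p l \<and> p l < 1} \<subseteq> {i}"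
        proof
          fix l assume l: "l \<in> {l\<in>{1..k}. 0 < p l \<and> p l < 1}"
          hence "l \<in> frac n p" using k unfolding frac_def by auto
          hence "l = i \<or> j \<le> l" by (rule between)
          thus "l \<in> {i}" using l False by auto
        qed
        hence "card {l\<in>{1..k}. 0 < p l \<and> p l < 1} \<le> card {i}" by (intro card_mono) auto
        thus "card {l\<in>{1..k}. 0 < p l \<and> p l < 1} \<le> 1" by simp
      qed
    qed
  qed
  with vo show ?thesis by blast
qed

lemma main_ind: "valid_probs n p \<Longrightarrow> \<exists>\<Omega>. varopt n p \<Omega> \<and> prefix_ok n p \<Omega>"
proof (induction "card (frac n p)" arbitrary: p rule: less_induct)
  case less
  show ?case
  proof (cases "frac n p = {}")
    case True thus ?thesis using base_case less.prems by blast
  next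
    case False
    show ?thesis by (rule step_case[OF less.prems False]) (use less.hyps in blast)
  qed
qed


lemma sorted_nth_less_iff:
  fixes xs :: "nat list"
  assumes "sorted_wrt (<) xs" "i < length xs" "j < length xs"
  shows "xs!i < xs!j \<longleftrightarrow> i < j"
  using assms by (metis not_less_iff_gr_or_eq order_less_asym sorted_wrt_nth_less)

lemma card_range_lower:
  fixes xs :: "nat list"
  assumes "sorted_wrt (<) xs" "a \<le> b" "b < length xs"
  shows "b - a + 1 \<le> card (set xs \<inter> {xs!a..xs!b})"
proof -
  have sub: "(\<lambda>i. xs!i) ` {a..b} \<subseteq> set xs \<inter> {xs!a..xs!b}"
  proof
    fix y assume "y \<in> (\<lambda>i. xs!i) ` {a..b}"
    then obtain i where i: "a \<le> i" "i \<le> b" "y = xs!i" by auto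
    have "xs!a \<le> xs!i" using i assms sorted_nth_less_iff[OF assms(1), of a i]
      by (cases "a = i") auto
    moreover have "xs!i \<le> xs!b" using i assms sorted_nth_less_iff[OF assms(1), of i b]
      by (cases "i = b") auto
    ultimately show "y \<in> set xs \<inter> {xs!a..xs!b}" using i assms by auto
  qed
  have inj: "inj_on (\<lambda>i. xs!i) {a..b}"
  proof (rule inj_onI)
    fix x y assume "x \<in> {a..b}" "y \<in> {a..b}" "xs!x = xs!y"
    then show "x = y" using assms sorted_nth_less_iff[OF assms(1), of x y] sorted_nth_less_iff[OF assms(1), of y x]
      by (metis atLeastAtMost_iff le_less_trans linorder_neqE_nat order_less_irrefl)
  qed
  have "card ((\<lambda>i. xs!i) ` {a..b}) = b - a + 1" using card_image[OF inj] assms by simp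
  moreover have "card ((\<lambda>i. xs!i) ` {a..b}) \<le> card (set xs \<inter> {xs!a..xs!b})"
    by (rule card_mono[OF _ sub]) auto
  ultimately show ?thesis by simp
qed

lemma card_range_upper:
  fixes xs :: "nat list"
  assumes "sorted_wrt (<) xs" "j < k" "k < length xs"
  shows "card (set xs \<inter> {xs!j+1..xs!k-1}) \<le> k - j - 1"
proof -
  have sub: "set xs \<inter> {xs!j+1..xs!k-1} \<subseteq> (\<lambda>i. xs!i) ` {j+1..k-1}"
  proof
    fix y assume y: "y \<in> set xs \<inter> {xs!j+1..xs!k-1}"
    then obtain i where i: "i < length xs" "y = xs!i" by (auto simp: in_set_conv_nth)
    with y have "xs!j < xs!i" "xs!i < xs!k" by auto
    hence "j < i" "i < k" using sorted_nth_less_iff[OF assms(1)] i assms by auto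
    thus "y \<in> (\<lambda>i. xs!i) ` {j+1..k-1}" using i by auto
  qed
  have "card (set xs \<inter> {xs!j+1..xs!k-1}) \<le> card ((\<lambda>i. xs!i) ` {j+1..k-1})"
    by (rule card_mono[OF _ sub]) auto
  also have "\<dots> \<le> card {j+1..k-1}" by (rule card_image_le) auto
  finally show ?thesis by simp
qed


definition good :: "nat \<Rightarrow> nat \<Rightarrow> nat \<Rightarrow> real \<Rightarrow> nat set set" where
 "good m n s D = {S. S \<subseteq> {1..n} \<and> card S = s \<and> (\<forall>i1 i2. 1 \<le> i1 \<and> i1 \<le> i2 \<and> i2 \<le> n \<longrightarrow>
     \<bar>real (card (S \<inter> {i1..i2})) - (\<Sum>i\<in>{i1..i2}. 1 / real m)\<bar> \<le> D)}"

lemma good_disc: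
  assumes "S \<in> good m n s D" "1 \<le> i1" "i1 \<le> i2" "i2 \<le> n"
  shows "\<bar>real (card (S \<inter> {i1..i2})) - (real i2 - real i1 + 1) / real m\<bar> \<le> D"
proof -
  have eq: "(\<Sum>i\<in>{i1..i2}. 1 / real m) = (real i2 - real i1 + 1) / real m"
    using assms(3) by (simp add: of_nat_diff)
  have h: "\<bar>real (card (S \<inter> {i1..i2})) - (\<Sum>i\<in>{i1..i2}. 1 / real m)\<bar> \<le> D"
    using assms unfolding good_def by blast
  show ?thesis using h unfolding eq by assumption
qed

lemma good_image:
  fixes m n s :: nat and D :: real
  assumes m1: "m \<ge> 1" and s1: "s \<ge> 1" and D1: "1 \<le> D" and D2: "D \<le> 2" and Sg: "S \<in> good m n s D"
  defines "W \<equiv> nat \<lfloor>real m * (D - 1) + 1\<rfloor>"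
  shows "S \<in> (\<lambda>(t, d). (\<lambda>k. nat (t + int ((k+1)*m) + int (d k))) ` {..<s}) `
              ({-2 * int m .. int m + 1} \<times> (PiE {..<s} (\<lambda>_. {0..W})))"
proof -
  have Ssub: "S \<subseteq> {1..n}" and cardS: "card S = s" using Sg unfolding good_def by auto
  have Sfin: "finite S" using Ssub by (auto intro: finite_subset)
  define xs where "xs = sorted_list_of_set S"
  have sxs: "sorted_wrt (<) xs" unfolding xs_def by (rule strict_sorted_list_of_set)
  have setxs: "set xs = S" unfolding xs_def using Sfin by simp
  have lenxs: "length xs = s" unfolding xs_def using cardS by simp
  have xin: "xs!k \<in> S" if "k < s" for k using that setxs lenxs nth_mem by blast
  have xb1: "1 \<le> xs!k" if "k < s" for k using xin[OF that] Ssub by auto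
  have xbn: "xs!k \<le> n" if "k < s" for k using xin[OF that] Ssub by auto
  have dsc: "\<And>i1 i2. 1 \<le> i1 \<Longrightarrow> i1 \<le> i2 \<Longrightarrow> i2 \<le> n \<Longrightarrow>
     \<bar>real (card (S \<inter> {i1..i2})) - (real i2 - real i1 + 1) / real m\<bar> \<le> D"
    using good_disc[OF Sg] by blast
  define z where "z k = int (xs!k) - int ((k+1)*m)" for k
  have mpos: "real m > 0" using m1 by simp
  have Wge: "real m * (D - 1) \<ge> 0" using D1 by simp
  have z1: "real_of_int (z k - z j) \<le> real m * (D - 1) + 1" if js: "j < s" and ks: "k < s" for j k
  proof (cases j k rule: linorder_cases)
    case less
    show ?thesis
    proof (cases "xs!j + 1 \<le> xs!k - 1")
      case True
      have "card (S \<inter> {xs!j+1..xs!k-1}) \<le> k - j - 1"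
        using card_range_upper[OF sxs less] ks lenxs setxs by simp
      hence c: "real (card (S \<inter> {xs!j+1..xs!k-1})) \<le> real k - real j - 1"
        using less by linarith
      have "\<bar>real (card (S \<inter> {xs!j+1..xs!k-1})) - (real (xs!k - 1) - real (xs!j+1) + 1) / real m\<bar> \<le> D"
        using dsc[of "xs!j+1" "xs!k-1"] True xbn[OF ks] by simp
      with c have "(real (xs!k - 1) - real (xs!j+1) + 1) / real m \<le> D + real k - real j - 1" by linarith
      hence "real (xs!k - 1) - real (xs!j+1) + 1 \<le> real m * (D + real k - real j - 1)"
        using mpos by (simp add: field_simps)
      moreover have "real (xs!k - 1) = real (xs!k) - 1" using xb1[OF ks] by (simp add: of_nat_diff)
      ultimately have "real (xs!k) - real (xs!j) - 1 \<le> real m * D + real m * real k - real m * real j - real m"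
        by (simp add: algebra_simps)
      then show ?thesis unfolding z_def by (simp add: algebra_simps)
    next
      case False
      hence "xs!k \<le> xs!j + 1" by linarith
      hence "real (xs!k) \<le> real (xs!j) + 1" by linarith
      moreover have "real m * real j \<le> real m * real k" using less by (intro mult_left_mono) auto
      ultimately show ?thesis unfolding z_def using Wge by (simp add: algebra_simps)
    qed
  next
    case equal
    then show ?thesis using Wge by simp
  next
    case greater
    have "j - k + 1 \<le> card (S \<inter> {xs!k..xs!j})"
      using card_range_lower[OF sxs, of k j] greater js lenxs setxs by simp
    hence c: "real j - real k + 1 \<le> real (card (S \<inter> {xs!k..xs!j}))"
      using greater by linarith
    have le: "xs!k \<le> xs!j" using sorted_nth_less_iff[OF sxs, of k j] greater js ks lenxs by simp
    have "\<bar>real (card (S \<inter> {xs!k..xs!j})) - (real (xs!j) - real (xs!k) + 1) / real m\<bar> \<le> D"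
      using dsc[of "xs!k" "xs!j"] le xb1[OF ks] xbn[OF js] by simp
    with c have "real j - real k + 1 - (real (xs!j) - real (xs!k) + 1) / real m \<le> D" by linarith
    hence "real m * (real j - real k + 1) - (real (xs!j) - real (xs!k) + 1) \<le> real m * D"
      using mpos by (simp add: field_simps)
    then show ?thesis unfolding z_def by (simp add: algebra_simps)
  qed
  have Wint: "int W = \<lfloor>real m * (D - 1) + 1\<rfloor>" unfolding W_def using Wge by simp
  have z1': "z k - z j \<le> int W" if "j < s" "k < s" for j k
    unfolding Wint le_floor_iff using z1[OF that] by simp
  have z2: "z k \<ge> - 2 * int m" if ks: "k < s" for k
  proof -
    have "k - 0 + 1 \<le> card (set xs \<inter> {xs!0..xs!k})"
      by (rule card_range_lower[OF sxs]) (use ks lenxs in auto)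
    moreover have "card (set xs \<inter> {xs!0..xs!k}) \<le> card (S \<inter> {1..xs!k})"
      using xb1[of 0] s1 by (intro card_mono) (use setxs Sfin in auto)
    ultimately have c: "real k + 1 \<le> real (card (S \<inter> {1..xs!k}))" by linarith
    have "\<bar>real (card (S \<inter> {1..xs!k})) - (real (xs!k) - 1 + 1) / real m\<bar> \<le> D"
      using dsc[of 1 "xs!k"] xb1[OF ks] xbn[OF ks] by simp
    with c D2 have "real k + 1 - real (xs!k) / real m \<le> 2" by simp
    hence "real m * (real k + 1) - real (xs!k) \<le> 2 * real m"
      using mpos by (simp add: field_simps)
    hence "real_of_int (- 2 * int m) \<le> real_of_int (z k)" unfolding z_def by (simp add: algebra_simps)
    thus ?thesis by linarith
  qed
  have z3: "z 0 \<le> int m + 1"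
  proof (cases "xs!0 \<ge> 2")
    case True
    have e: "S \<inter> {1..xs!0 - 1} = {}"
    proof (rule ccontr)
      assume "S \<inter> {1..xs!0 - 1} \<noteq> {}"
      then obtain y where y: "y \<in> S" "y \<le> xs!0 - 1" by auto
      then obtain i where i: "i < s" "y = xs!i" using setxs lenxs by (auto simp: in_set_conv_nth)
      have "xs!0 \<le> xs!i" using sorted_nth_less_iff[OF sxs, of 0 i] i lenxs by (cases "i = 0") auto
      thus False using y i True by linarith
    qed
    have "\<bar>real (card (S \<inter> {1..xs!0 - 1})) - (real (xs!0 - 1) - 1 + 1) / real m\<bar> \<le> D"
      using dsc[of 1 "xs!0 - 1"] True xbn[OF s1[unfolded One_nat_def, THEN Suc_le_lessD]] by simp
    hence "(real (xs!0) - 1) / real m \<le> 2" using e D2 True by (simp add: of_nat_diff)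
    hence "real (xs!0) - 1 \<le> 2 * real m" using mpos by (simp add: field_simps)
    thus ?thesis unfolding z_def by simp
  next
    case False
    thus ?thesis unfolding z_def by simp
  qed
  define t where "t = Min (z ` {..<s})"
  have fin: "finite (z ` {..<s})" and ne: "z ` {..<s} \<noteq> {}" using s1 by (auto simp: lessThan_empty_iff)
  obtain j0 where j0: "j0 < s" "t = z j0" using Min_in[OF fin ne] unfolding t_def by auto
  have tle: "t \<le> z k" if "k < s" for k unfolding t_def using fin that by simp
  define d where "d = (\<lambda>k. if k < s then nat (z k - t) else undefined)"
  have tin: "t \<in> {-2 * int m .. int m + 1}" using z2[OF j0(1)] j0 tle[of 0] s1 z3 by auto
  have din: "d \<in> PiE {..<s} (\<lambda>_. {0..W})"
    unfolding d_def using z1' j0 by (auto simp: PiE_def extensional_def nat_le_iff)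
  have "(\<lambda>k. nat (t + int ((k+1)*m) + int (d k))) ` {..<s} = (\<lambda>k. xs!k) ` {..<s}"
  proof (rule image_cong[OF refl])
    fix k assume "k \<in> {..<s}"
    hence "k < s" by simp
    thus "nat (t + int ((k+1)*m) + int (d k)) = xs!k"
      unfolding d_def using tle[of k] by (simp add: z_def)
  qed
  also have "\<dots> = set xs" using lenxs by (auto simp: in_set_conv_nth)
  finally have "S = (\<lambda>(t, d). (\<lambda>k. nat (t + int ((k+1)*m) + int (d k))) ` {..<s}) (t, d)"
    using setxs by simp
  thus ?thesis using tin din by blast
qed


lemma card_good:
  fixes m n s :: nat and D :: real
  assumes m1: "m \<ge> 1" and s1: "s \<ge> 1" and D1: "1 \<le> D" and D2: "D \<le> 2"
  shows "real (card (good m n s D)) \<le> (3 * real m + 2) * (real m * (D - 1) + 2) ^ s"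
proof -
  define W where "W = nat \<lfloor>real m * (D - 1) + 1\<rfloor>"
  define T where "T = {-2 * int m .. int m + 1} \<times> PiE {..<s} (\<lambda>_. {0..W})"
  define F where "F = (\<lambda>(t::int, d::nat\<Rightarrow>nat). (\<lambda>k. nat (t + int ((k+1)*m) + int (d k))) ` {..<s})"
  have sub: "good m n s D \<subseteq> F ` T"
    using good_image[OF assms] unfolding W_def T_def F_def by blast
  have finT: "finite T" unfolding T_def by (auto intro!: finite_PiE)
  have "card (good m n s D) \<le> card (F ` T)" by (rule card_mono[OF _ sub]) (use finT in auto)
  also have "\<dots> \<le> card T" by (rule card_image_le[OF finT])
  also have "\<dots> = (3 * m + 2) * (W + 1) ^ s"
  proof -
    have "nat (2 + 3 * int m) = 3 * m + 2" by simp
    thus ?thesis unfolding T_def by (simp add: card_cartesian_product card_PiE)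
  qed
  finally have c0: "real (card (good m n s D)) \<le> real ((3 * m + 2) * (W + 1) ^ s)"
    by (simp only: of_nat_le_iff)
  have "real ((3 * m + 2) * (W + 1) ^ s) = (3 * real m + 2) * (real W + 1) ^ s" by (simp add: algebra_simps)
  with c0 have c: "real (card (good m n s D)) \<le> (3 * real m + 2) * (real W + 1) ^ s" by simp
  have Wge: "real m * (D - 1) \<ge> 0" using D1 by simp
  have "real W = of_int \<lfloor>real m * (D - 1) + 1\<rfloor>" unfolding W_def using Wge by simp
  also have "\<dots> \<le> real m * (D - 1) + 1" by (rule of_int_floor_le)
  finally have "real W + 1 \<le> real m * (D - 1) + 2" by simp
  hence "(real W + 1) ^ s \<le> (real m * (D - 1) + 2) ^ s" by (intro power_mono) auto
  hence "(3 * real m + 2) * (real W + 1) ^ s \<le> (3 * real m + 2) * (real m * (D - 1) + 2) ^ s"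
    by (rule mult_left_mono) simp
  with c show ?thesis by linarith
qed


lemma part2:
  fixes D :: real assumes DL: "D < 2"
  shows "\<exists>n::nat. \<exists>p. n \<ge> 1 \<and> valid_probs n p \<and> \<not> (\<exists>\<Omega>. varopt n p \<Omega> \<and> interval_disc_le n p \<Omega> D)"
proof -
  define D' where "D' = max D 1"
  have D'1: "1 \<le> D'" and D'2: "D' < 2" and DD: "D \<le> D'" using DL unfolding D'_def by auto
  define m where "m = nat \<lceil>4 / (2 - D')\<rceil> + 1"
  have m1: "m \<ge> 1" unfolding m_def by simp
  have "real m \<ge> 4 / (2 - D')"
  proof -
    have "4 / (2 - D') \<le> of_int \<lceil>4 / (2 - D')\<rceil>" by (rule le_of_int_ceiling)
    also have "\<dots> \<le> real (nat \<lceil>4 / (2 - D')\<rceil>)" by simp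
    also have "\<dots> \<le> real m" unfolding m_def by simp
    finally show ?thesis .
  qed
  hence mbig: "real m * (2 - D') \<ge> 4" using D'2 by (simp add: field_simps)
  define \<rho> where "\<rho> = D' / 2"
  have \<rho>0: "0 < \<rho>" and \<rho>1: "\<rho> < 1" unfolding \<rho>_def using D'1 D'2 by auto
  have key: "real m * (D' - 1) + 2 \<le> real m * \<rho>" unfolding \<rho>_def using mbig by (simp add: algebra_simps)
  obtain s0 where s0: "\<rho> ^ s0 < 1 / (3 * real m + 2)"
    using real_arch_pow_inv[of "1 / (3 * real m + 2)" \<rho>] \<rho>1 by auto
  define s where "s = Suc s0"
  have s1: "s \<ge> 1" unfolding s_def by simp
  have "\<rho> ^ s \<le> \<rho> ^ s0" unfolding s_def using \<rho>0 \<rho>1 by (simp add: mult_left_le_one_le)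
  with s0 have rs0: "\<rho> ^ s < 1 / (3 * real m + 2)" by linarith
  have rs: "(3 * real m + 2) * \<rho> ^ s < 1"
  proof -
    have "0 < 3 * real m + 2" by simp
    from rs0 this show ?thesis by (simp add: less_divide_eq mult.commute)
  qed
  define n where "n = m * s"
  define p where "p = (\<lambda>_::nat. 1 / real m)"
  have n1: "n \<ge> 1" unfolding n_def using m1 s1 by simp
  have sump: "(\<Sum>i\<in>{1..n}. p i) = real s"
    unfolding p_def n_def using m1 by simp
  have valid: "valid_probs n p"
    unfolding valid_probs_def sump using m1 by (auto simp: p_def)
  show ?thesis
  proof (intro exI conjI)
    show "n \<ge> 1" by (rule n1)
    show "valid_probs n p" by (rule valid)
    show "\<not> (\<exists>\<Omega>. varopt n p \<Omega> \<and> interval_disc_le n p \<Omega> D)"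
    proof
      assume "\<exists>\<Omega>. varopt n p \<Omega> \<and> interval_disc_le n p \<Omega> D"
      then obtain \<Omega> where vo: "varopt n p \<Omega>" and dl: "interval_disc_le n p \<Omega> D" by blast
      have supp: "set_pmf \<Omega> \<subseteq> good m n s D'"
      proof
        fix S assume S: "S \<in> set_pmf \<Omega>"
        have Ssub: "S \<subseteq> {1..n}" using vo S unfolding varopt_def by auto
        have "real (card S) = real s" using vo S sump unfolding varopt_def by auto
        hence cs: "card S = s" by simp
        have "\<forall>i1 i2. 1 \<le> i1 \<and> i1 \<le> i2 \<and> i2 \<le> n \<longrightarrow>
           \<bar>real (card (S \<inter> {i1..i2})) - (\<Sum>i\<in>{i1..i2}. 1 / real m)\<bar> \<le> D'"
          using dl S DD unfolding interval_disc_le_def p_def by force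
        thus "S \<in> good m n s D'" unfolding good_def using Ssub cs by blast
      qed
      have pm: "pmf \<Omega> S \<le> (1 / real m) ^ s" if Sg: "S \<in> good m n s D'" for S
      proof -
        have Ssub: "S \<subseteq> {1..n}" and cs: "card S = s" using Sg unfolding good_def by auto
        have "pmf \<Omega> S = measure_pmf.prob \<Omega> {S}" by (simp add: measure_pmf_single)
        also have "\<dots> \<le> measure_pmf.prob \<Omega> {T. S \<subseteq> T}"
          by (rule measure_pmf.finite_measure_mono) auto
        also have "\<dots> \<le> (\<Prod>i\<in>S. p i)" using vo Ssub unfolding varopt_def by blast
        also have "\<dots> = (1 / real m) ^ s" unfolding p_def using cs by simp
        finally show ?thesis .
      qed
      have fing: "finite (good m n s D')"
        by (rule finite_subset[of _ "Pow {1..n}"]) (auto simp: good_def)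
      have "1 = (\<Sum>S\<in>good m n s D'. pmf \<Omega> S)" using sum_pmf_eq_1[OF fing supp] by simp
      also have "\<dots> \<le> (\<Sum>S\<in>good m n s D'. (1 / real m) ^ s)" by (rule sum_mono) (rule pm)
      also have "\<dots> = real (card (good m n s D')) * (1 / real m) ^ s" by simp
      also have "\<dots> \<le> ((3 * real m + 2) * (real m * (D' - 1) + 2) ^ s) * (1 / real m) ^ s"
        by (rule mult_right_mono[OF card_good[OF m1 s1 D'1 less_imp_le[OF D'2]]]) simp
      also have "\<dots> \<le> ((3 * real m + 2) * (real m * \<rho>) ^ s) * (1 / real m) ^ s"
        using key D'1 by (intro mult_right_mono mult_left_mono power_mono) auto
      also have "\<dots> = (3 * real m + 2) * \<rho> ^ s"
        using m1 by (simp add: power_mult_distrib power_divide field_simps)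
      finally show False using rs by simp
    qed
  qed
qed



lemma part1:
  assumes v: "valid_probs n p"
  shows "\<exists>\<Omega>. varopt n p \<Omega> \<and> interval_disc_le n p \<Omega> 2"
proof -
  obtain \<Omega> where vo: "varopt n p \<Omega>" and po: "prefix_ok n p \<Omega>" using main_ind[OF v] by blast
  have "interval_disc_le n p \<Omega> 2" unfolding interval_disc_le_def
  proof (intro ballI allI impI)
    fix S i1 i2 assume S: "S \<in> set_pmf \<Omega>" and r: "1 \<le> i1 \<and> i1 \<le> i2 \<and> i2 \<le> n"
    have h2: "\<bar>real (card (S \<inter> {1..i2})) - (\<Sum>i\<in>{1..i2}. p i)\<bar> \<le> 1"
      using po S r unfolding prefix_ok_def by blast
    have r1: "i1 - 1 \<le> n" using r by linarith
    have h1: "\<bar>real (card (S \<inter> {1..i1-1})) - (\<Sum>i\<in>{1..i1-1}. p i)\<bar> \<le> 1"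
      using po S r1 unfolding prefix_ok_def by blast
    have U: "{1..i2} = {1..i1-1} \<union> {i1..i2}" using r by auto
    have D: "{1..i1-1} \<inter> {i1..i2} = {}" by auto
    have SU: "S \<inter> {1..i2} = (S \<inter> {1..i1-1}) \<union> (S \<inter> {i1..i2})" using U by auto
    have c: "card (S \<inter> {1..i2}) = card (S \<inter> {1..i1-1}) + card (S \<inter> {i1..i2})"
      unfolding SU by (rule card_Un_disjoint) (use D in auto)
    hence cr: "real (card (S \<inter> {1..i2})) = real (card (S \<inter> {1..i1-1})) + real (card (S \<inter> {i1..i2}))"
      by simp
    have s: "(\<Sum>i\<in>{1..i2}. p i) = (\<Sum>i\<in>{1..i1-1}. p i) + (\<Sum>i\<in>{i1..i2}. p i)"
      unfolding U by (rule sum.union_disjoint) (use D in auto)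
    show "\<bar>real (card (S \<inter> {i1..i2})) - (\<Sum>i\<in>{i1..i2}. p i)\<bar> \<le> 2"
      using h1 h2 cr s unfolding abs_le_iff by linarith
  qed
  with vo show ?thesis by blast
qed

theorem theorem1:
  shows "(\<forall>n::nat. \<forall>p. n \<ge> 1 \<and> valid_probs n p \<longrightarrow>
            (\<exists>\<Omega>. varopt n p \<Omega> \<and> interval_disc_le n p \<Omega> 2))
       \<and> (\<forall>D::real. D < 2 \<longrightarrow>
            (\<exists>n::nat. \<exists>p. n \<ge> 1 \<and> valid_probs n p \<and>
               \<not> (\<exists>\<Omega>. varopt n p \<Omega> \<and> interval_disc_le n p \<Omega> D)))"
  using part1 part2 by blast

end
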